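(* For every $p\in(0,1/3)$ there is a $p$-locally dense graphon $W$ such that: (1) $\iint_{\Omega\times\Omega}W(x,y)\,dx\,dy=\frac{9p}{8}$; (2) for every graphon $W'$ which is not $0$ a.e., $W-W'$ is not $p$-locally dense; (3) $W\otimes W$ is not $p^2$-locally dense; (4) for every $\ell\ge5$, $W^{\circ\ell}$ is not $p^\ell$-locally dense.
   Context: Let $(\Omega,\mu)$ be an atomless standard probability space. A graphon is a symmetric measurable $W:\Omega\times\Omega\to[0,1]$. A symmetric bounded measurable function $W$ on $\Omega\times\Omega$ is $p$-locally dense if $\iint_{U\times U}W(x,y)\,dx\,dy\ge p\,\mu(U)^2$ for every measurable $U\subseteq\Omega$. The tensor product $W\otimes W$ is the function on $(\Omega\times\Omega)^2$ given by $(W\otimes W)((x_1,x_2),(y_1,y_2))=W(x_1,y_1)W(x_2,y_2)$, with $\Omega\times\Omega$ carrying the product measure. The operator product is $(W_1\circ W_2)(x,y)=\int_\Omega W_1(x,z)W_2(z,y)\,dz$, and $W^{\circ\ell}$ denotes the $\ell$-fold operator product of $W$ with itself. *)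

theory Defs
  imports "HOL-Analysis.Analysis"
begin

definition Omega :: "real measure" where
  "Omega = restrict_space lborel {0..1}"

definition graphon :: "'a measure \<Rightarrow> ('a \<Rightarrow> 'a \<Rightarrow> real) \<Rightarrow> bool" where
  "graphon M W \<longleftrightarrow>
     (\<lambda>z. W (fst z) (snd z)) \<in> borel_measurable (M \<Otimes>\<^sub>M M) \<and>
     (\<forall>x\<in>space M. \<forall>y\<in>space M. W x y = W y x) \<and>
     (\<forall>x\<in>space M. \<forall>y\<in>space M. 0 \<le> W x y \<and> W x y \<le> 1)"

definition locally_dense :: "'a measure \<Rightarrow> real \<Rightarrow> ('a \<Rightarrow> 'a \<Rightarrow> real) \<Rightarrow> bool" where
  "locally_dense M p W \<longleftrightarrow>
     (\<forall>U\<in>sets M. (\<integral>z\<in>U \<times> U. W (fst z) (snd z) \<partial>(M \<Otimes>\<^sub>M M)) \<ge> p * (measure M U)\<^sup>2)"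

definition tensor :: "('a \<Rightarrow> 'a \<Rightarrow> real) \<Rightarrow> ('a \<Rightarrow> 'a \<Rightarrow> real) \<Rightarrow> ('a \<times> 'a \<Rightarrow> 'a \<times> 'a \<Rightarrow> real)" where
  "tensor W1 W2 = (\<lambda>a b. W1 (fst a) (fst b) * W2 (snd a) (snd b))"

definition opprod :: "'a measure \<Rightarrow> ('a \<Rightarrow> 'a \<Rightarrow> real) \<Rightarrow> ('a \<Rightarrow> 'a \<Rightarrow> real) \<Rightarrow> ('a \<Rightarrow> 'a \<Rightarrow> real)" where
  "opprod M W1 W2 = (\<lambda>x y. \<integral>z. W1 x z * W2 z y \<partial>M)"

text \<open>l-fold operator power (only meaningful for l >= 1; the case 0 is a dummy).\<close>
fun opow :: "'a measure \<Rightarrow> ('a \<Rightarrow> 'a \<Rightarrow> real) \<Rightarrow> nat \<Rightarrow> ('a \<Rightarrow> 'a \<Rightarrow> real)" where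
  "opow M W 0 = (\<lambda>x y. 0)"
| "opow M W (Suc 0) = W"
| "opow M W (Suc (Suc n)) = opprod M (opow M W (Suc n)) W"

end

theory Submission
  imports Defs
begin

lemma space_Omega[simp]: "space Omega = {0..1}"
  by (simp add: Omega_def space_restrict_space)

lemma sets_Omega: "A \<in> sets Omega \<longleftrightarrow> A \<in> sets borel \<and> A \<subseteq> {0..1}"
  unfolding Omega_def by (auto simp: sets_restrict_space_iff)

lemma finite_Omega: "finite_measure Omega"
  unfolding Omega_def by (intro finite_measureI) (auto simp: space_restrict_space emeasure_restrict_space)

lemma finite_Omega2: "finite_measure (Omega \<Otimes>\<^sub>M Omega)"
  by (intro finite_measure_pair_measure finite_Omega)

lemma measure_Omega: "A \<in> sets borel \<Longrightarrow> A \<subseteq> {0..1} \<Longrightarrow> measure Omega A = measure lborel A"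
  unfolding Omega_def by (subst measure_restrict_space) auto

lemma measure_Times_fm:
  assumes "finite_measure M" "A \<in> sets M" "B \<in> sets M"
  shows "measure (M \<Otimes>\<^sub>M M) (A \<times> B) = measure M A * measure M B"
proof -
  interpret finite_measure M by fact
  show ?thesis using emeasure_pair_measure_Times[OF assms(2,3)]
    by (simp add: measure_def enn2real_mult)
qed

lemma CL:
  fixes M :: "'a measure" and Q :: "'i \<Rightarrow> 'a set" and \<kappa> :: "'i \<Rightarrow> 'i \<Rightarrow> real" and K :: "'a \<Rightarrow> 'a \<Rightarrow> real"
  assumes fin: "finite I" and fm: "finite_measure M"
    and Qs: "\<And>k. k\<in>I \<Longrightarrow> Q k \<in> sets M" and disj: "disjoint_family_on Q I"
    and K: "\<And>k l x y. k\<in>I \<Longrightarrow> l\<in>I \<Longrightarrow> x\<in>Q k \<Longrightarrow> y\<in>Q l \<Longrightarrow> K x y = \<kappa> k l"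
  shows "(\<integral>z\<in>(\<Union>k\<in>I. Q k) \<times> (\<Union>k\<in>I. Q k). K (fst z) (snd z) \<partial>(M \<Otimes>\<^sub>M M))
     = (\<Sum>k\<in>I. \<Sum>l\<in>I. \<kappa> k l * (measure M (Q k) * measure M (Q l)))"
proof -
  interpret finite_measure M by fact
  have eq: "indicator ((\<Union>k\<in>I. Q k) \<times> (\<Union>k\<in>I. Q k)) z * K (fst z) (snd z)
      = (\<Sum>k\<in>I. \<Sum>l\<in>I. \<kappa> k l * indicator (Q k \<times> Q l) z)" for z
  proof (cases "fst z \<in> (\<Union>k\<in>I. Q k) \<and> snd z \<in> (\<Union>k\<in>I. Q k)")
    case True
    then obtain k0 l0 where k0: "k0 \<in> I" "fst z \<in> Q k0" and l0: "l0 \<in> I" "snd z \<in> Q l0" by blast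
    have "(\<Sum>k\<in>I. \<Sum>l\<in>I. \<kappa> k l * indicator (Q k \<times> Q l) z)
        = (\<Sum>k\<in>I. (\<Sum>l\<in>I. \<kappa> k l * indicator (Q l) (snd z)) * indicator (Q k) (fst z))"
      by (intro sum.cong refl) (simp add: indicator_times sum_distrib_left sum_distrib_right mult_ac)
    also have "\<dots> = (\<Sum>k\<in>I. \<kappa> k l0 * indicator (Q k) (fst z))"
      by (intro sum.cong refl) (simp add: sum_indicator_disjoint_family[OF disj l0(2) fin l0(1)])
    also have "\<dots> = \<kappa> k0 l0"
      by (rule sum_indicator_disjoint_family[OF disj k0(2) fin k0(1)])
    finally show ?thesis using True K[OF k0(1) l0(1) k0(2) l0(2)]
      by (simp add: indicator_def mem_Times_iff)
  next
    case False
    then have "indicator (Q k \<times> Q l) z = (0::real)" if "k \<in> I" "l \<in> I" for k l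
      using that by (auto simp: indicator_def mem_Times_iff)
    then have "(\<Sum>k\<in>I. \<Sum>l\<in>I. \<kappa> k l * indicator (Q k \<times> Q l) z) = 0"
      by (intro sum.neutral ballI) simp
    moreover have "indicator ((\<Union>k\<in>I. Q k) \<times> (\<Union>k\<in>I. Q k)) z = (0::real)"
      using False by (simp add: indicator_def mem_Times_iff)
    ultimately show ?thesis by simp
  qed
  have "(\<integral>z\<in>(\<Union>k\<in>I. Q k) \<times> (\<Union>k\<in>I. Q k). K (fst z) (snd z) \<partial>(M \<Otimes>\<^sub>M M))
      = (\<integral>z. (\<Sum>k\<in>I. \<Sum>l\<in>I. \<kappa> k l * indicator (Q k \<times> Q l) z) \<partial>(M \<Otimes>\<^sub>M M))"
    unfolding set_lebesgue_integral_def using eq by simp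
  also have "\<dots> = (\<Sum>k\<in>I. \<Sum>l\<in>I. \<kappa> k l * measure (M \<Otimes>\<^sub>M M) (Q k \<times> Q l))"
  proof -
    interpret F2: finite_measure "M \<Otimes>\<^sub>M M" by (intro finite_measure_pair_measure fm)
    have int: "integrable (M \<Otimes>\<^sub>M M) (indicator (Q k \<times> Q l) :: _ \<Rightarrow> real)" if "k \<in> I" "l \<in> I" for k l
      using that Qs by (intro integrable_real_indicator) (auto simp: F2.emeasure_real less_top[symmetric])
    have sp: "Q k \<times> Q l \<inter> space (M \<Otimes>\<^sub>M M) = Q k \<times> Q l" if "k \<in> I" "l \<in> I" for k l
      using that Qs[of k] Qs[of l] sets.sets_into_space by (auto simp: space_pair_measure)
    show ?thesis
      using int sp by (simp add: integral_sum integrable_sum)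
  qed
  also have "\<dots> = (\<Sum>k\<in>I. \<Sum>l\<in>I. \<kappa> k l * (measure M (Q k) * measure M (Q l)))"
    using Qs by (intro sum.cong refl) (simp add: measure_Times_fm[OF fm])
  finally show ?thesis .
qed

definition pat :: "nat \<Rightarrow> nat \<Rightarrow> real" where
  "pat i j = (if (i = 5 \<and> j = 5) \<or> (i < 5 \<and> j < 5 \<and> (i = j \<or> (i + 2) mod 5 = j \<or> (j + 2) mod 5 = i)) then 1 else 0)"

definition part :: "real \<Rightarrow> nat" where
  "part x = (if x < 1/20 then 0 else if x < 1/10 then 1 else if x < 3/20 then 2
     else if x < 9/20 then 3 else if x < 3/4 then 4 else 5)"

definition Wc :: "real \<Rightarrow> real \<Rightarrow> real \<Rightarrow> real" where
  "Wc p x y = 3 * p * pat (part x) (part y)"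

definition Pt :: "nat \<Rightarrow> real set" where
  "Pt i = {x\<in>{0..1}. part x = i}"

lemma part_meas: "part \<in> borel \<rightarrow>\<^sub>M count_space UNIV"
  unfolding part_def by measurable

lemma Pt_eq:
  "Pt 0 = {0..<1/20}" "Pt 1 = {1/20..<1/10}" "Pt 2 = {1/10..<3/20}"
  "Pt 3 = {3/20..<9/20}" "Pt 4 = {9/20..<3/4}" "Pt 5 = {3/4..1}"
  by (auto simp: Pt_def part_def split: if_splits)

lemma Pt_big: "i \<ge> 6 \<Longrightarrow> Pt i = {}"
  by (auto simp: Pt_def part_def split: if_splits)

lemma Pt_sets: "Pt i \<in> sets Omega"
proof -
  have "Pt i = part -` {i} \<inter> {0..1}" by (auto simp: Pt_def)
  moreover have "part -` {i} \<in> sets borel"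
    using measurable_sets[OF part_meas, of "{i}"] by simp
  ultimately show ?thesis by (auto simp: sets_Omega)
qed

lemma Pt_sub: "Pt i \<subseteq> {0..1}" by (auto simp: Pt_def)

lemma Pt_disj: "disjoint_family_on Pt I"
  by (auto simp: disjoint_family_on_def Pt_def)

lemma Pt_Un: "(\<Union>i\<in>{..<6}. Pt i) = {0..1}"
proof -
  have "part x < 6" for x by (simp add: part_def)
  then show ?thesis by (auto simp: Pt_def)
qed

lemma Pt_measure:
  "measure Omega (Pt 0) = 1/20" "measure Omega (Pt 1) = 1/20" "measure Omega (Pt 2) = 1/20"
  "measure Omega (Pt 3) = 3/10" "measure Omega (Pt 4) = 3/10" "measure Omega (Pt 5) = 1/4"
  unfolding Pt_eq by (subst measure_Omega; auto)+

lemma Pt_measure_Suc0: "measure Omega (Pt (Suc 0)) = 1/20"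
  using Pt_measure(2) by simp

lemma part_Pt: "x \<in> Pt i \<Longrightarrow> part x = i" by (simp add: Pt_def)

lemma Wc_meas: "(\<lambda>z. Wc p (fst z) (snd z)) \<in> borel_measurable (Omega \<Otimes>\<^sub>M Omega)"
proof -
  let ?g = "\<lambda>z::real\<times>real. (part (fst z), part (snd z))"
  have g: "?g \<in> Omega \<Otimes>\<^sub>M Omega \<rightarrow>\<^sub>M count_space UNIV"
  proof (subst measurable_count_space_eq2_countable, safe)
    fix i j :: nat
    have "?g -` {(i, j)} \<inter> space (Omega \<Otimes>\<^sub>M Omega) = Pt i \<times> Pt j"
      by (auto simp: Pt_def space_pair_measure)
    then show "?g -` {(i, j)} \<inter> space (Omega \<Otimes>\<^sub>M Omega) \<in> sets (Omega \<Otimes>\<^sub>M Omega)"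
      using Pt_sets by simp
  qed auto
  have "(\<lambda>z. (\<lambda>ij z. 3 * p * pat (fst ij) (snd ij)) (?g z) z) \<in> borel_measurable (Omega \<Otimes>\<^sub>M Omega)"
    by (rule measurable_compose_countable[OF _ g]) simp
  then show ?thesis by (simp add: Wc_def)
qed

lemma horn:
  fixes a b c d e :: real
  assumes "a \<ge> 0" "b \<ge> 0" "c \<ge> 0" "d \<ge> 0" "e \<ge> 0"
  shows "(a+b+c+d+e)\<^sup>2 \<le> 2*(a\<^sup>2+b\<^sup>2+c\<^sup>2+d\<^sup>2+e\<^sup>2 + 2*(a*c+b*d+c*e+d*a+e*b))"
proof (cases "e \<ge> d")
  case True
  have "2*(a\<^sup>2+b\<^sup>2+c\<^sup>2+d\<^sup>2+e\<^sup>2 + 2*(a*c+b*d+c*e+d*a+e*b)) - (a+b+c+d+e)\<^sup>2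
      = (a-b+c+d-e)\<^sup>2 + 4*b*d + 4*c*(e-d)"
    by (simp add: power2_eq_square algebra_simps)
  moreover have "0 \<le> 4*b*d + 4*c*(e-d)" using assms True by simp
  ultimately show ?thesis by (smt (verit) zero_le_power2)
next
  case False
  have "2*(a\<^sup>2+b\<^sup>2+c\<^sup>2+d\<^sup>2+e\<^sup>2 + 2*(a*c+b*d+c*e+d*a+e*b)) - (a+b+c+d+e)\<^sup>2
      = (a-b+c-d+e)\<^sup>2 + 4*b*e + 4*a*(d-e)"
    by (simp add: power2_eq_square algebra_simps)
  moreover have "0 \<le> 4*b*e + 4*a*(d-e)" using assms False by simp
  ultimately show ?thesis by (smt (verit) zero_le_power2)
qed

definition qf :: "(nat \<Rightarrow> real) \<Rightarrow> real" where
  "qf m = (m 0)\<^sup>2 + (m 1)\<^sup>2 + (m 2)\<^sup>2 + (m 3)\<^sup>2 + (m 4)\<^sup>2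
     + 2 * (m 0 * m 2 + m 1 * m 3 + m 2 * m 4 + m 3 * m 0 + m 4 * m 1) + (m 5)\<^sup>2"

lemma qf_ge:
  assumes "\<And>i. m i \<ge> 0"
  shows "(\<Sum>i<6. m i)\<^sup>2 \<le> 3 * qf m"
proof -
  define S where "S = m 0 + m 1 + m 2 + m 3 + m 4"
  define A where "A = (m 0)\<^sup>2 + (m 1)\<^sup>2 + (m 2)\<^sup>2 + (m 3)\<^sup>2 + (m 4)\<^sup>2
     + 2 * (m 0 * m 2 + m 1 * m 3 + m 2 * m 4 + m 3 * m 0 + m 4 * m 1)"
  have h: "S\<^sup>2 \<le> 2*A" unfolding S_def A_def
    by (rule horn) (simp_all add: assms)
  have s: "(\<Sum>i<6. m i) = S + m 5" by (simp add: eval_nat_numeral S_def)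
  have q: "qf m = A + (m 5)\<^sup>2" by (simp add: qf_def A_def)
  have e: "3/2 * S\<^sup>2 + 3 * (m 5)\<^sup>2 - (S + m 5)\<^sup>2 = (S - 2 * m 5)\<^sup>2 / 2"
    by (simp add: power2_eq_square algebra_simps)
  have "0 \<le> (S - 2 * m 5)\<^sup>2 / 2" by simp
  have aux: "x \<le> 3*a+3*z" if "3/2*y + 3*z - x = t" "0 \<le> t" "y \<le> 2*a" for x y z t a :: real
    using that by linarith
  show ?thesis unfolding s q distrib_left by (rule aux[OF e]) (use h in auto)
qed

lemma Wc_const: "x \<in> Pt i \<Longrightarrow> y \<in> Pt j \<Longrightarrow> Wc p x y = 3 * p * pat i j"
  by (simp add: Wc_def part_Pt)

lemma pat_vals: "pat 0 0 = 1" "pat 0 (Suc 0) = 0" "pat 0 2 = 1" "pat 0 3 = 1" "pat 0 4 = 0" "pat 0 5 = 0"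
  "pat (Suc 0) 0 = 0" "pat (Suc 0) (Suc 0) = 1" "pat (Suc 0) 2 = 0" "pat (Suc 0) 3 = 1" "pat (Suc 0) 4 = 1" "pat (Suc 0) 5 = 0"
  "pat 2 0 = 1" "pat 2 (Suc 0) = 0" "pat 2 2 = 1" "pat 2 3 = 0" "pat 2 4 = 1" "pat 2 5 = 0"
  "pat 3 0 = 1" "pat 3 (Suc 0) = 1" "pat 3 2 = 0" "pat 3 3 = 1" "pat 3 4 = 0" "pat 3 5 = 0"
  "pat 4 0 = 0" "pat 4 (Suc 0) = 1" "pat 4 2 = 1" "pat 4 3 = 0" "pat 4 4 = 1" "pat 4 5 = 0"
  "pat 5 0 = 0" "pat 5 (Suc 0) = 0" "pat 5 2 = 0" "pat 5 3 = 0" "pat 5 4 = 0" "pat 5 5 = 1"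
  by (simp_all add: pat_def)

lemma pat_vals1: "pat 0 0 = 1" "pat 0 1 = 0" "pat 0 2 = 1" "pat 0 3 = 1" "pat 0 4 = 0" "pat 0 5 = 0"
  "pat 1 0 = 0" "pat 1 1 = 1" "pat 1 2 = 0" "pat 1 3 = 1" "pat 1 4 = 1" "pat 1 5 = 0"
  "pat 2 0 = 1" "pat 2 1 = 0" "pat 2 2 = 1" "pat 2 3 = 0" "pat 2 4 = 1" "pat 2 5 = 0"
  "pat 3 0 = 1" "pat 3 1 = 1" "pat 3 2 = 0" "pat 3 3 = 1" "pat 3 4 = 0" "pat 3 5 = 0"
  "pat 4 0 = 0" "pat 4 1 = 1" "pat 4 2 = 1" "pat 4 3 = 0" "pat 4 4 = 1" "pat 4 5 = 0"
  "pat 5 0 = 0" "pat 5 1 = 0" "pat 5 2 = 0" "pat 5 3 = 0" "pat 5 4 = 0" "pat 5 5 = 1"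
  by (simp_all add: pat_def)

lemma sum6: "(\<Sum>k<6. \<Sum>l<6. 3 * p * pat k l * (m k * m l)) = 3 * p * qf m"
proof -
  have "(\<Sum>k<6. \<Sum>l<6. 3 * p * pat k l * (m k * m l)) = 3 * p * (\<Sum>k<6. \<Sum>l<6. pat k l * (m k * m l))"
    by (simp add: sum_distrib_left mult_ac)
  also have "(\<Sum>k<6. \<Sum>l<6. pat k l * (m k * m l)) = qf m"
    by (simp add: lessThan_nat_numeral pat_vals qf_def power2_eq_square algebra_simps)
  finally show ?thesis .
qed
lemma W_int:
  assumes U: "U \<in> sets Omega"
  shows "(\<integral>z\<in>U \<times> U. Wc p (fst z) (snd z) \<partial>(Omega \<Otimes>\<^sub>M Omega)) = 3 * p * qf (\<lambda>i. measure Omega (U \<inter> Pt i))"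
proof -
  have Uu: "(\<Union>k\<in>{..<6}. U \<inter> Pt k) = U" using Pt_Un U by (auto simp: sets_Omega)
  have "(\<integral>z\<in>(\<Union>k\<in>{..<6}. U \<inter> Pt k) \<times> (\<Union>k\<in>{..<6}. U \<inter> Pt k). Wc p (fst z) (snd z) \<partial>(Omega \<Otimes>\<^sub>M Omega))
     = (\<Sum>k<6. \<Sum>l<6. 3 * p * pat k l * (measure Omega (U \<inter> Pt k) * measure Omega (U \<inter> Pt l)))"
    by (rule CL) (use U Pt_sets finite_Omega in \<open>auto simp: disjoint_family_on_def Pt_def Wc_const\<close>)
  then show ?thesis unfolding Uu sum6 .
qed

lemma meas_U:
  assumes U: "U \<in> sets Omega"
  shows "measure Omega U = (\<Sum>i<6. measure Omega (U \<inter> Pt i))"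
proof -
  have Uu: "(\<Union>k\<in>{..<6}. U \<inter> Pt k) = U" using Pt_Un U by (auto simp: sets_Omega)
  have "measure Omega (\<Union>k\<in>{..<6}. U \<inter> Pt k) = (\<Sum>i<6. measure Omega (U \<inter> Pt i))"
    using U Pt_sets finite_measure.emeasure_finite[OF finite_Omega]
    by (intro measure_finite_Union) (auto simp: disjoint_family_on_def Pt_def)
  then show ?thesis unfolding Uu .
qed

lemma pat_sym: "pat i j = pat j i"
  by (auto simp: pat_def)

lemma pat_01: "pat i j = 0 \<or> pat i j = 1"
  by (auto simp: pat_def)

lemma Wc_graphon:
  assumes "0 < p" "p < 1/3"
  shows "graphon Omega (Wc p)"
  unfolding graphon_def
proof (intro conjI ballI)
  show "(\<lambda>z. Wc p (fst z) (snd z)) \<in> borel_measurable (Omega \<Otimes>\<^sub>M Omega)" by (rule Wc_meas)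
  fix x y
  show "Wc p x y = Wc p y x" by (simp add: Wc_def pat_sym)
  show "0 \<le> Wc p x y" using assms pat_01[of "part x" "part y"] by (auto simp: Wc_def)
  show "Wc p x y \<le> 1" using assms pat_01[of "part x" "part y"] by (auto simp: Wc_def)
qed

lemma Wc_dense:
  assumes "0 < p"
  shows "locally_dense Omega p (Wc p)"
  unfolding locally_dense_def
proof
  fix U assume U: "U \<in> sets Omega"
  let ?m = "\<lambda>i. measure Omega (U \<inter> Pt i)"
  have "(measure Omega U)\<^sup>2 \<le> 3 * qf ?m"
    unfolding meas_U[OF U] by (rule qf_ge) simp
  then have "p * (measure Omega U)\<^sup>2 \<le> p * (3 * qf ?m)"
    using assms by (intro mult_left_mono) auto
  then show "p * (measure Omega U)\<^sup>2 \<le> (\<integral>z\<in>U \<times> U. Wc p (fst z) (snd z) \<partial>(Omega \<Otimes>\<^sub>M Omega))"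
    unfolding W_int[OF U] by simp
qed

lemma Wc_density:
  "(\<integral>z. Wc p (fst z) (snd z) \<partial>(Omega \<Otimes>\<^sub>M Omega)) = 9 * p / 8"
proof -
  have sp: "space (Omega \<Otimes>\<^sub>M Omega) = {0..1} \<times> {0..1}" by (simp add: space_pair_measure)
  have "(\<integral>z. Wc p (fst z) (snd z) \<partial>(Omega \<Otimes>\<^sub>M Omega))
      = (\<integral>z\<in>{0..1} \<times> {0..1}. Wc p (fst z) (snd z) \<partial>(Omega \<Otimes>\<^sub>M Omega))"
    unfolding set_lebesgue_integral_def by (rule Bochner_Integration.integral_cong[OF refl]) (auto simp: sp indicator_def)
  also have "\<dots> = 3 * p * qf (\<lambda>i. measure Omega ({0..1} \<inter> Pt i))"
    by (rule W_int) (simp add: sets_Omega)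
  also have "(\<lambda>i. measure Omega ({0..1} \<inter> Pt i)) = (\<lambda>i. measure Omega (Pt i))"
    using Pt_sub by (simp add: Int_absorb1)
  also have "qf \<dots> = 3/8"
    by (simp add: qf_def Pt_measure Pt_measure_Suc0 power2_eq_square)
  finally show ?thesis by simp
qed

lemma Pt5_iff: "z \<in> {0..1} \<Longrightarrow> z \<in> Pt 5 \<longleftrightarrow> part z = 5"
  by (simp add: Pt_def)

lemma opow_D:
  assumes "x \<in> Pt 5" "y \<in> Pt 5"
  shows "opow Omega (Wc p) (Suc n) x y = 3*p*(3*p/4)^n"
  using assms
proof (induction n arbitrary: x y)
  case 0
  then show ?case by (simp add: Wc_const pat_vals1)
next
  case (Suc n)
  have "opow Omega (Wc p) (Suc (Suc n)) x y = (\<integral>z. opow Omega (Wc p) (Suc n) x z * Wc p z y \<partial>Omega)"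
    by (simp add: opprod_def)
  also have "\<dots> = (\<integral>z. (3*p*(3*p/4)^n * (3*p)) * indicator (Pt 5) z \<partial>Omega)"
  proof (rule Bochner_Integration.integral_cong[OF refl])
    fix z assume z: "z \<in> space Omega"
    show "opow Omega (Wc p) (Suc n) x z * Wc p z y = (3*p*(3*p/4)^n * (3*p)) * indicator (Pt 5) z"
    proof (cases "z \<in> Pt 5")
      case True
      then show ?thesis using Suc.IH[OF Suc.prems(1) True] Wc_const[OF True Suc.prems(2)]
        by (simp add: pat_vals1)
    next
      case False
      then have "part z \<noteq> 5" using z by (simp add: Pt_def)
      then have "pat (part z) 5 = 0" by (simp add: pat_def)
      then have "Wc p z y = 0" using Suc.prems(2) by (simp add: Wc_def part_Pt)
      then show ?thesis using False by simp
    qed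
  qed
  also have "\<dots> = (3*p*(3*p/4)^n * (3*p)) * measure Omega (Pt 5)"
    using Pt_sub by (simp add: Int_absorb2)
  also have "\<dots> = 3*p*(3*p/4)^(Suc n)"
    by (simp add: Pt_measure)
  finally show ?case .
qed

lemma opow_not_dense:
  assumes p: "0 < p" and l: "l \<ge> 5"
  shows "\<not> locally_dense Omega (p ^ l) (opow Omega (Wc p) l)"
proof
  assume dense: "locally_dense Omega (p ^ l) (opow Omega (Wc p) l)"
  obtain n where n: "l = Suc n" "n \<ge> 4" using l by (cases l) auto
  define v where "v = 3*p*(3*p/4)^n"
  have "(\<integral>z\<in>(\<Union>k\<in>{0::nat}. Pt 5) \<times> (\<Union>k\<in>{0::nat}. Pt 5). opow Omega (Wc p) l (fst z) (snd z) \<partial>(Omega \<Otimes>\<^sub>M Omega))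
     = (\<Sum>k\<in>{0::nat}. \<Sum>j\<in>{0::nat}. v * (measure Omega (Pt 5) * measure Omega (Pt 5)))"
    by (rule CL) (auto simp: finite_Omega Pt_sets n(1) v_def opow_D disjoint_family_on_def)
  then have int: "(\<integral>z\<in>Pt 5 \<times> Pt 5. opow Omega (Wc p) l (fst z) (snd z) \<partial>(Omega \<Otimes>\<^sub>M Omega)) = v / 16"
    by (simp add: Pt_measure)
  have "(3/4::real)^n \<le> (3/4)^4" by (rule power_decreasing) (use n in auto)
  also have "(3/4::real)^4 = 81/256" by (simp add: power_divide)
  finally have "3 * (3/4::real)^n < 1" by linarith
  then have "3 * (3/4::real)^n * p^l < 1 * p^l" using p by (intro mult_strict_right_mono) auto
  moreover have "v = 3 * (3/4::real)^n * p^l"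
    by (simp add: v_def n(1) power_mult_distrib power_divide)
  ultimately have "v < p^l" by simp
  moreover have "p^l * (measure Omega (Pt 5))\<^sup>2 \<le> v / 16"
    using dense Pt_sets[of 5] unfolding locally_dense_def int[symmetric] by blast
  ultimately show False by (simp add: Pt_measure power2_eq_square)
qed


definition js :: "nat \<Rightarrow> real" where
  "js i = (if i = 0 then 0 else if i = 1 then 1/20 else if i = 2 then 1/10 else if i = 3 then 3/20
     else if i = 4 then 9/20 else 3/4)"

definition Jc :: "nat \<Rightarrow> real set" where
  "Jc i = {js i .. js i + 1/40}"

lemma Jc_sub: "i < 6 \<Longrightarrow> Jc i \<subseteq> Pt i"
  by (auto simp: Jc_def js_def Pt_def part_def less_Suc_eq numeral_eq_Suc)

lemma Jc_sub01: "Jc i \<subseteq> {0..1}"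
  by (auto simp: Jc_def js_def)

lemma Jc_sets: "Jc i \<in> sets Omega"
  using Jc_sub01 by (auto simp: sets_Omega Jc_def)

lemma Jc_measure: "measure Omega (Jc i) = 1/40"
  using Jc_sub01 by (subst measure_Omega) (auto simp: Jc_def)

definition ta :: "nat \<Rightarrow> nat" where "ta k = [0,1,2,3,4,3,4,5,5,5] ! k"
definition tb :: "nat \<Rightarrow> nat" where "tb k = [0,2,4,1,3,5,5,3,4,5] ! k"

lemma ta_tb_lt: "k < 10 \<Longrightarrow> ta k < 6 \<and> tb k < 6"
  by (auto simp: ta_def tb_def less_Suc_eq numeral_eq_Suc)

lemma ta_tb_inj: "k < 10 \<Longrightarrow> l < 10 \<Longrightarrow> k \<noteq> l \<Longrightarrow> ta k \<noteq> ta l \<or> tb k \<noteq> tb l"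
  by (auto simp: ta_def tb_def less_Suc_eq numeral_eq_Suc)

lemma lt10: "(k::nat) < 10 \<Longrightarrow> k \<in> {0,1,2,3,4,5,6,7,8,9}"
  by auto

lemma tensor_vals: "k < 10 \<Longrightarrow> l < 10 \<Longrightarrow> pat (ta k) (ta l) * pat (tb k) (tb l) = (if k = l then 1 else 0)"
  apply (drule lt10)+
  apply (simp only: insert_iff empty_iff)
  apply (elim disjE)
  apply (simp_all add: ta_def tb_def pat_vals1 pat_vals)
  done

lemma Jc_disj: "i < 6 \<Longrightarrow> j < 6 \<Longrightarrow> i \<noteq> j \<Longrightarrow> Jc i \<inter> Jc j = {}"
  using Jc_sub[of i] Jc_sub[of j] by (auto simp: Pt_def)

lemma tensor_not_dense:
  assumes p: "0 < p"
  shows "\<not> locally_dense (Omega \<Otimes>\<^sub>M Omega) (p\<^sup>2) (tensor (Wc p) (Wc p))"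
proof
  assume dense: "locally_dense (Omega \<Otimes>\<^sub>M Omega) (p\<^sup>2) (tensor (Wc p) (Wc p))"
  define Q where "Q k = Jc (ta k) \<times> Jc (tb k)" for k
  define U where "U = (\<Union>k\<in>{..<10::nat}. Q k)"
  have Qs: "Q k \<in> sets (Omega \<Otimes>\<^sub>M Omega)" for k
    unfolding Q_def by (intro pair_measureI Jc_sets)
  have disj: "disjoint_family_on Q {..<10::nat}"
    unfolding disjoint_family_on_def
  proof (intro ballI impI)
    fix k l :: nat assume kl: "k \<in> {..<10}" "l \<in> {..<10}" "k \<noteq> l"
    then have "ta k \<noteq> ta l \<or> tb k \<noteq> tb l" using ta_tb_inj by auto
    then show "Q k \<inter> Q l = {}"
      using Jc_disj[of "ta k" "ta l"] Jc_disj[of "tb k" "tb l"] ta_tb_lt[of k] ta_tb_lt[of l] kl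
      unfolding Q_def by auto
  qed
  have mQ: "measure (Omega \<Otimes>\<^sub>M Omega) (Q k) = 1/1600" for k
    unfolding Q_def by (simp add: measure_Times_fm[OF finite_Omega Jc_sets Jc_sets] Jc_measure)
  have fm2: "finite_measure (Omega \<Otimes>\<^sub>M Omega)" by (rule finite_Omega2)
  have "(\<integral>z\<in>U \<times> U. tensor (Wc p) (Wc p) (fst z) (snd z) \<partial>((Omega \<Otimes>\<^sub>M Omega) \<Otimes>\<^sub>M (Omega \<Otimes>\<^sub>M Omega)))
    = (\<Sum>k\<in>{..<10::nat}. \<Sum>l\<in>{..<10::nat}. (3*p*pat (ta k) (ta l) * (3*p*pat (tb k) (tb l)))
         * (measure (Omega \<Otimes>\<^sub>M Omega) (Q k) * measure (Omega \<Otimes>\<^sub>M Omega) (Q l)))"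
    unfolding U_def
  proof (rule CL[OF _ fm2 Qs disj])
    fix k l x y assume k: "k \<in> {..<10::nat}" and l: "l \<in> {..<10::nat}" and x: "x \<in> Q k" and y: "y \<in> Q l"
    have "fst x \<in> Pt (ta k)" "snd x \<in> Pt (tb k)" "fst y \<in> Pt (ta l)" "snd y \<in> Pt (tb l)"
      using x y Jc_sub ta_tb_lt k l unfolding Q_def by (auto simp: mem_Times_iff)
    then show "tensor (Wc p) (Wc p) x y = 3*p*pat (ta k) (ta l) * (3*p*pat (tb k) (tb l))"
      by (simp add: tensor_def Wc_const)
  qed simp
  also have "\<dots> = (\<Sum>k\<in>{..<10::nat}. \<Sum>l\<in>{..<10::nat}. (if k = l then 9*p\<^sup>2/1600\<^sup>2 else 0))"
  proof (intro sum.cong refl)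
    fix k l assume "k \<in> {..<10::nat}" "l \<in> {..<10::nat}"
    then have "pat (ta k) (ta l) * pat (tb k) (tb l) = (if k = l then 1 else 0)"
      by (intro tensor_vals) auto
    then show "(3*p*pat (ta k) (ta l) * (3*p*pat (tb k) (tb l)))
         * (measure (Omega \<Otimes>\<^sub>M Omega) (Q k) * measure (Omega \<Otimes>\<^sub>M Omega) (Q l))
       = (if k = l then 9*p\<^sup>2/1600\<^sup>2 else 0)"
      unfolding mQ by (simp add: power2_eq_square algebra_simps)
  qed
  also have "\<dots> = 90 * p\<^sup>2 / 1600\<^sup>2"
    by simp
  finally have int: "(\<integral>z\<in>U \<times> U. tensor (Wc p) (Wc p) (fst z) (snd z) \<partial>((Omega \<Otimes>\<^sub>M Omega) \<Otimes>\<^sub>M (Omega \<Otimes>\<^sub>M Omega)))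
     = 90 * p\<^sup>2 / 1600\<^sup>2" .
  have U: "U \<in> sets (Omega \<Otimes>\<^sub>M Omega)" unfolding U_def using Qs by auto
  have mU: "measure (Omega \<Otimes>\<^sub>M Omega) U = 10/1600"
  proof -
    have "measure (Omega \<Otimes>\<^sub>M Omega) U = (\<Sum>k\<in>{..<10::nat}. measure (Omega \<Otimes>\<^sub>M Omega) (Q k))"
      unfolding U_def using Qs disj finite_measure.emeasure_finite[OF fm2]
      by (intro measure_finite_Union) auto
    then show ?thesis by (simp add: mQ)
  qed
  have "p\<^sup>2 * (measure (Omega \<Otimes>\<^sub>M Omega) U)\<^sup>2 \<le> 90 * p\<^sup>2 / 1600\<^sup>2"
    using dense U unfolding locally_dense_def int[symmetric] by blast
  then show False using p by (simp add: mU power2_eq_square)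
qed

lemma EXT:
  assumes A: "A \<in> sets Omega" and R: "R \<in> sets Omega" "R \<subseteq> A"
    and v: "measure Omega R \<le> v" "v \<le> measure Omega A"
  shows "\<exists>V\<in>sets Omega. R \<subseteq> V \<and> V \<subseteq> A \<and> measure Omega V = v"
proof -
  interpret F: finite_measure Omega by (rule finite_Omega)
  define \<phi> where "\<phi> t = measure Omega (R \<union> (A \<inter> {..t}))" for t
  have A01: "A \<subseteq> {0..1}" and Ab: "A \<in> sets borel" using A by (auto simp: sets_Omega)
  have S: "R \<union> (A \<inter> {..t}) \<in> sets Omega" for t
    using A R by (auto simp: sets_Omega)
  have mono: "\<phi> s \<le> \<phi> t" if "s \<le> t" for s t
    unfolding \<phi>_def using that S by (intro F.finite_measure_mono) auto
  have lip: "\<phi> t \<le> \<phi> s + (t - s)" if "s \<le> t" for s t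
  proof -
    define B where "B = {s<..t} \<inter> {0..1}"
    have B: "B \<in> sets Omega" by (auto simp: B_def sets_Omega)
    have "R \<union> (A \<inter> {..t}) \<subseteq> (R \<union> (A \<inter> {..s})) \<union> B"
      using A01 by (auto simp: B_def)
    then have "\<phi> t \<le> measure Omega ((R \<union> (A \<inter> {..s})) \<union> B)"
      unfolding \<phi>_def using S B by (intro F.finite_measure_mono) auto
    also have "\<dots> \<le> \<phi> s + measure Omega B"
      unfolding \<phi>_def using S B by (intro measure_subadditive) (auto simp: F.emeasure_finite)
    also have "measure Omega B = measure lborel B"
      by (rule measure_Omega) (auto simp: B_def)
    also have "measure lborel B \<le> measure lborel {s<..t}"
      using that by (intro measure_mono_fmeasurable) (auto simp: B_def fmeasurable_def)
    also have "measure lborel {s<..t} = t - s" using that by simp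
    finally show ?thesis by simp
  qed
  have "1-lipschitz_on {-1..1} \<phi>"
  proof (rule lipschitz_onI)
    fix s t :: real
    show "dist (\<phi> s) (\<phi> t) \<le> 1 * dist s t"
    proof (cases "s \<le> t")
      case True
      then show ?thesis using mono[OF True] lip[OF True] by (simp add: dist_real_def)
    next
      case False
      then have "t \<le> s" by simp
      then show ?thesis using mono[of t s] lip[of t s] by (simp add: dist_real_def)
    qed
  qed simp
  then have cont: "continuous_on {-1..1} \<phi>" by (rule lipschitz_on_continuous_on)
  have "A \<inter> {..-1} = {}" using A01 by auto
  then have phi0: "\<phi> (-1) = measure Omega R" by (simp add: \<phi>_def)
  have "R \<union> (A \<inter> {..1}) = A" using A01 R by auto
  then have phi1: "\<phi> 1 = measure Omega A" by (simp add: \<phi>_def)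
  obtain t where t: "\<phi> t = v"
    using IVT'[of \<phi> "-1" v 1] cont v phi0 phi1 by auto
  show ?thesis
    by (rule bexI[of _ "R \<union> (A \<inter> {..t})"]) (use S R t in \<open>auto simp: \<phi>_def\<close>)
qed

definition cell :: "nat \<Rightarrow> real set" where
  "cell k = {x\<in>{0..1}. nat \<lfloor>40*x\<rfloor> = k}"

definition partOf :: "nat \<Rightarrow> nat" where
  "partOf k = (if k < 2 then 0 else if k < 4 then 1 else if k < 6 then 2
     else if k < 18 then 3 else if k < 30 then 4 else 5)"

lemma cell_bounds:
  assumes "x \<in> cell k"
  shows "real k \<le> 40*x" "40*x < real k + 1"
proof -
  have x: "0 \<le> x" "x \<le> 1" and k: "nat \<lfloor>40*x\<rfloor> = k" using assms by (auto simp: cell_def)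
  have "0 \<le> \<lfloor>40*x\<rfloor>" using x by simp
  then have "real_of_int \<lfloor>40*x\<rfloor> = real k" using k by (metis of_int_of_nat_eq nat_0_le)
  then show "real k \<le> 40*x" "40*x < real k + 1"
    by (metis of_int_floor_le) (metis \<open>real_of_int \<lfloor>40*x\<rfloor> = real k\<close> real_of_int_floor_add_one_gt)
qed

lemma cell_eq: "cell k = {0..1} \<inter> {real k/40 ..< (real k + 1)/40}"
proof (intro set_eqI iffI)
  fix x assume x: "x \<in> cell k"
  then show "x \<in> {0..1} \<inter> {real k/40 ..< (real k + 1)/40}"
    using cell_bounds[OF x] by (auto simp: cell_def)
next
  fix x assume x: "x \<in> {0..1} \<inter> {real k/40 ..< (real k + 1)/40}"
  then have "real k \<le> 40*x" "40*x < real k + 1" by auto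
  then have "\<lfloor>40*x\<rfloor> = int k" by (simp add: floor_eq_iff)
  then show "x \<in> cell k" using x by (auto simp: cell_def)
qed

lemma cell_sets: "cell k \<in> sets Omega"
  unfolding cell_eq by (auto simp: sets_Omega)

lemma thr: "real k \<le> y \<Longrightarrow> y < real k + 1 \<Longrightarrow> (y < real t \<longleftrightarrow> k < t)"
proof -
  assume a: "real k \<le> y" "y < real k + 1"
  show ?thesis
  proof
    assume "y < real t" then have "real k < real t" using a by linarith
    then show "k < t" by simp
  next
    assume "k < t" then have "real k + 1 \<le> real t" by (metis Suc_leI of_nat_Suc of_nat_le_iff add.commute)
    then show "y < real t" using a by linarith
  qed
qed

lemma cell_part: "x \<in> cell k \<Longrightarrow> part x = partOf k"
proof -
  assume x: "x \<in> cell k"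
  note b = cell_bounds[OF x]
  have e: "40*x < real t \<longleftrightarrow> k < t" for t using thr[OF b] .
  have "x < 1/20 \<longleftrightarrow> 40*x < real (2::nat)" "x < 1/10 \<longleftrightarrow> 40*x < real (4::nat)"
    "x < 3/20 \<longleftrightarrow> 40*x < real (6::nat)" "x < 9/20 \<longleftrightarrow> 40*x < real (18::nat)"
    "x < 3/4 \<longleftrightarrow> 40*x < real (30::nat)" by auto
  then show ?thesis unfolding part_def partOf_def e by simp
qed

lemma cell_Pt: "x \<in> cell k \<Longrightarrow> x \<in> Pt (partOf k)"
  using cell_part[of x k] by (auto simp: Pt_def cell_def)

lemma cell_measure: "measure Omega (cell k) \<le> 1/40"
proof -
  have "measure Omega (cell k) = measure lborel (cell k)"
    using cell_sets by (intro measure_Omega) (auto simp: sets_Omega)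
  also have "\<dots> \<le> measure lborel {real k/40 .. (real k + 1)/40}"
    using cell_sets by (intro measure_mono_fmeasurable) (auto simp: cell_eq sets_Omega fmeasurable_def)
  also have "\<dots> = 1/40" by (simp add: field_simps)
  finally show ?thesis .
qed

lemma cells_Un: "(\<Union>k\<in>{..<41}. cell k) = {0..1}"
proof -
  have "nat \<lfloor>40*x\<rfloor> < 41" if "x \<le> 1" for x :: real
  proof -
    have "\<lfloor>40*x\<rfloor> \<le> 40" using that by (simp add: floor_le_iff)
    then show ?thesis by linarith
  qed
  then show ?thesis by (auto simp: cell_def)
qed

lemma cells_disj: "disjoint_family_on cell I"
  by (auto simp: disjoint_family_on_def cell_def)

lemma SPLIT:
  fixes f :: "_ \<Rightarrow> real"
  assumes fin: "finite I" and Qs: "\<And>k. k\<in>I \<Longrightarrow> Q k \<in> sets M" and disj: "disjoint_family_on Q I"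
    and int: "integrable (M \<Otimes>\<^sub>M M) f"
  shows "(\<integral>z\<in>(\<Union>k\<in>I. Q k) \<times> (\<Union>k\<in>I. Q k). f z \<partial>(M \<Otimes>\<^sub>M M))
    = (\<Sum>k\<in>I. \<Sum>l\<in>I. (\<integral>z\<in>Q k \<times> Q l. f z \<partial>(M \<Otimes>\<^sub>M M)))"
proof -
  have ind: "indicator ((\<Union>k\<in>I. Q k) \<times> (\<Union>k\<in>I. Q k)) z = (\<Sum>k\<in>I. \<Sum>l\<in>I. indicator (Q k \<times> Q l) z :: real)" for z
    by (simp add: indicator_times indicator_UN_disjoint[OF fin disj] sum_product)
  have "(\<integral>z\<in>(\<Union>k\<in>I. Q k) \<times> (\<Union>k\<in>I. Q k). f z \<partial>(M \<Otimes>\<^sub>M M))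
     = (\<integral>z. (\<Sum>k\<in>I. \<Sum>l\<in>I. indicator (Q k \<times> Q l) z * f z) \<partial>(M \<Otimes>\<^sub>M M))"
    unfolding set_lebesgue_integral_def ind by (simp add: sum_distrib_right)
  also have "\<dots> = (\<Sum>k\<in>I. \<Sum>l\<in>I. (\<integral>z. indicator (Q k \<times> Q l) z * f z \<partial>(M \<Otimes>\<^sub>M M)))"
  proof -
    have i: "integrable (M \<Otimes>\<^sub>M M) (\<lambda>z. indicator (Q k \<times> Q l) z * f z)" if "k \<in> I" "l \<in> I" for k l
      using integrable_mult_indicator[OF pair_measureI[OF Qs[OF that(1)] Qs[OF that(2)]] int] by simp
    show ?thesis using i by (simp add: integral_sum integrable_sum)
  qed
  finally show ?thesis unfolding set_lebesgue_integral_def by simp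
qed

definition nv :: "nat \<Rightarrow> nat \<Rightarrow> real" where
  "nv c i = (if i = 5 then 2 else if i = c then 2 else if i = (c+1) mod 5 \<or> i = (c+4) mod 5 then 1 else 0)"

definition ctr :: "nat \<Rightarrow> nat \<Rightarrow> nat" where
  "ctr X Y = (if X = 5 then (if Y = 5 then 0 else Y) else if Y = 5 then X
     else if (X+2) mod 5 = Y then (X+1) mod 5 else if (Y+2) mod 5 = X then (Y+1) mod 5 else X)"

lemma lt6: "(k::nat) < 6 \<Longrightarrow> k \<in> {0,1,2,3,4,5}"
  by auto

lemma lt5: "(k::nat) < 5 \<Longrightarrow> k \<in> {0,1,2,3,4}"
  by auto

lemma ctr_lt: "X < 6 \<Longrightarrow> Y < 6 \<Longrightarrow> ctr X Y < 5"
  apply (drule lt6)+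
  apply (simp only: insert_iff empty_iff)
  apply (elim disjE)
  apply (simp_all add: ctr_def)
  done

lemma comb: "X < 6 \<Longrightarrow> Y < 6 \<Longrightarrow> i < 6 \<Longrightarrow>
    (if X = i then 1 else 0) + (if Y = i then 1 else 0) \<le> nv (ctr X Y) i"
  apply (drule lt6)+
  apply (simp only: insert_iff empty_iff)
  apply (elim disjE)
  apply (simp_all add: ctr_def nv_def)
  done

lemma nv_le: "nv c i \<le> 2" "0 \<le> nv c i"
  by (auto simp: nv_def)

lemma sum6_expand: "(\<Sum>i<(6::nat). f i) = f 0 + f 1 + f 2 + f 3 + f 4 + (f 5 :: real)"
  by (simp add: eval_nat_numeral)

lemma nv_tight: "c < 5 \<Longrightarrow> 3 * qf (\<lambda>i. nv c i / 40) = (\<Sum>i<6. nv c i / 40)\<^sup>2"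
  apply (unfold sum6_expand qf_def)
  apply (drule lt5)
  apply (simp only: insert_iff empty_iff)
  apply (elim disjE)
  apply (simp_all add: nv_def power2_eq_square)
  done


lemma Pt_big_measure: "i < 6 \<Longrightarrow> 1/20 \<le> measure Omega (Pt i)"
  apply (drule lt6)
  apply (simp only: insert_iff empty_iff)
  apply (elim disjE)
  apply (simp_all add: Pt_measure Pt_measure_Suc0)
  done

lemma cell_Pt_inter: "measure Omega (cell a \<inter> Pt i) \<le> (if partOf a = i then 1/40 else 0)"
proof (cases "partOf a = i")
  case True
  have "measure Omega (cell a \<inter> Pt i) \<le> measure Omega (cell a)"
    using cell_sets by (intro finite_measure.finite_measure_mono[OF finite_Omega]) auto
  then show ?thesis using True cell_measure[of a] by simp
next
  case False
  then have "cell a \<inter> Pt i = {}" using cell_Pt[of _ a] by (auto simp: Pt_def)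
  then show ?thesis using False by simp
qed

lemma minimal:
  assumes p: "0 < p" "p < 1/3" and G: "graphon Omega W'"
    and nz: "\<not> (AE z in Omega \<Otimes>\<^sub>M Omega. W' (fst z) (snd z) = 0)"
  shows "\<not> locally_dense Omega p (\<lambda>x y. Wc p x y - W' x y)"
proof
  assume dense: "locally_dense Omega p (\<lambda>x y. Wc p x y - W' x y)"
  interpret F2: finite_measure "Omega \<Otimes>\<^sub>M Omega" by (rule finite_Omega2)
  interpret F: finite_measure Omega by (rule finite_Omega)
  let ?M = "Omega \<Otimes>\<^sub>M Omega"
  let ?f = "\<lambda>z. W' (fst z) (snd z)"
  have sp: "space ?M = {0..1} \<times> {0..1}" by (simp add: space_pair_measure)
  have fmeas: "?f \<in> borel_measurable ?M" using G by (simp add: graphon_def)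
  have fbnd: "0 \<le> ?f z \<and> ?f z \<le> 1" if "z \<in> space ?M" for z
    using G that by (auto simp: graphon_def sp mem_Times_iff)
  have fint: "integrable ?M ?f"
    using fbnd by (intro F2.integrable_const_bound[where B=1] fmeas AE_I2) auto
  have Wint: "integrable ?M (\<lambda>z. Wc p (fst z) (snd z))"
  proof (intro F2.integrable_const_bound[where B=1] Wc_meas AE_I2)
    fix z
    have "0 \<le> Wc p (fst z) (snd z)" "Wc p (fst z) (snd z) \<le> 1"
      using p pat_01[of "part (fst z)" "part (snd z)"] by (auto simp: Wc_def)
    then show "norm (Wc p (fst z) (snd z)) \<le> 1" by simp
  qed
  have "0 \<le> integral\<^sup>L ?M ?f" using fbnd by (intro integral_nonneg_AE AE_I2) auto
  moreover have "integral\<^sup>L ?M ?f \<noteq> 0"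
    using integral_nonneg_eq_0_iff_AE[OF fint] fbnd nz by (auto intro: AE_I2)
  ultimately have pos: "0 < integral\<^sup>L ?M ?f" by simp
  have "integral\<^sup>L ?M ?f = (\<integral>z\<in>{0..1} \<times> {0..1}. ?f z \<partial>?M)"
    unfolding set_lebesgue_integral_def
    by (rule Bochner_Integration.integral_cong[OF refl]) (auto simp: sp indicator_def)
  also have "\<dots> = (\<integral>z\<in>(\<Union>k\<in>{..<41}. cell k) \<times> (\<Union>k\<in>{..<41}. cell k). ?f z \<partial>?M)"
    by (simp add: cells_Un)
  also have "\<dots> = (\<Sum>a\<in>{..<41}. \<Sum>b\<in>{..<41}. (\<integral>z\<in>cell a \<times> cell b. ?f z \<partial>?M))"
    by (rule SPLIT[OF _ cell_sets cells_disj fint]) simp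
  finally have "0 < (\<Sum>a\<in>{..<41::nat}. \<Sum>b\<in>{..<41::nat}. (\<integral>z\<in>cell a \<times> cell b. ?f z \<partial>?M))"
    using pos by simp
  then obtain a b :: nat where ab: "a < 41" "b < 41" and cpos: "0 < (\<integral>z\<in>cell a \<times> cell b. ?f z \<partial>?M)"
  proof -
    assume h: "\<And>a b. a < 41 \<Longrightarrow> b < 41 \<Longrightarrow> 0 < (\<integral>z\<in>cell a \<times> cell b. ?f z \<partial>?M) \<Longrightarrow> thesis"
    show thesis
    proof (rule ccontr)
      assume "\<not> thesis"
      then have "(\<integral>z\<in>cell a \<times> cell b. ?f z \<partial>?M) \<le> 0" if "a < 41" "b < 41" for a b
        using h that by force
      then have "(\<Sum>a\<in>{..<41::nat}. \<Sum>b\<in>{..<41::nat}. (\<integral>z\<in>cell a \<times> cell b. ?f z \<partial>?M)) \<le> 0"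
        by (intro sum_nonpos) auto
      then show False using \<open>0 < (\<Sum>a\<in>{..<41::nat}. \<Sum>b\<in>{..<41::nat}. _)\<close> by simp
    qed
  qed
  define X where "X = partOf a"
  define Y where "Y = partOf b"
  have XY: "X < 6" "Y < 6" by (auto simp: X_def Y_def partOf_def)
  define c where "c = ctr X Y"
  have c: "c < 5" using ctr_lt[OF XY] by (simp add: c_def)
  define R where "R i = (cell a \<union> cell b) \<inter> Pt i" for i
  have "\<exists>V. V \<in> sets Omega \<and> R i \<subseteq> V \<and> V \<subseteq> Pt i \<and> measure Omega V = nv c i / 40" if i: "i < 6" for i
  proof (rule EXT[OF Pt_sets, of "R i" i, THEN bexE])
    show Rs: "R i \<in> sets Omega" unfolding R_def using cell_sets Pt_sets by auto
    show "R i \<subseteq> Pt i" by (auto simp: R_def)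
    have "measure Omega (R i) \<le> measure Omega (cell a \<inter> Pt i) + measure Omega (cell b \<inter> Pt i)"
      unfolding R_def Int_Un_distrib2
      using cell_sets Pt_sets by (intro measure_subadditive) (auto simp: F.emeasure_finite)
    also have "\<dots> \<le> (if X = i then 1/40 else 0) + (if Y = i then 1/40 else 0)"
      using cell_Pt_inter[of a i] cell_Pt_inter[of b i] by (simp add: X_def Y_def)
    also have "\<dots> = ((if X = i then 1 else 0) + (if Y = i then 1 else 0)) / 40" by simp
    also have "\<dots> \<le> nv c i / 40" using comb[OF XY i] by (simp add: c_def divide_right_mono)
    finally show "measure Omega (R i) \<le> nv c i / 40" .
    show "nv c i / 40 \<le> measure Omega (Pt i)"
      using Pt_big_measure[OF i] nv_le(1)[of c i] by simp
  qed blast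
  then obtain V where V: "\<And>i. i < 6 \<Longrightarrow> V i \<in> sets Omega \<and> R i \<subseteq> V i \<and> V i \<subseteq> Pt i \<and> measure Omega (V i) = nv c i / 40"
    by metis
  define U where "U = (\<Union>i\<in>{..<6::nat}. V i)"
  have Vdisj: "disjoint_family_on V {..<6}"
    unfolding disjoint_family_on_def
  proof (intro ballI impI)
    fix m n assume mn: "m \<in> {..<6::nat}" "n \<in> {..<6::nat}" "m \<noteq> n"
    have "V m \<subseteq> Pt m" "V n \<subseteq> Pt n" using V mn by auto
    moreover have "Pt m \<inter> Pt n = {}" using mn by (auto simp: Pt_def)
    ultimately show "V m \<inter> V n = {}" by blast
  qed
  have U: "U \<in> sets Omega" unfolding U_def using V by auto
  have mU: "measure Omega U = (\<Sum>i<6. nv c i / 40)"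
  proof -
    have "measure Omega U = (\<Sum>i<6. measure Omega (V i))"
      unfolding U_def using V Vdisj by (intro measure_finite_Union) (auto simp: F.emeasure_finite)
    also have "\<dots> = (\<Sum>i<6. nv c i / 40)"
    proof -
      have Vm: "\<And>i. i < 6 \<Longrightarrow> measure Omega (V i) = nv c i / 40" using V by blast
      show ?thesis by (intro sum.cong refl) (simp add: Vm)
    qed
    finally show ?thesis .
  qed
  have intW: "(\<integral>z\<in>U \<times> U. Wc p (fst z) (snd z) \<partial>?M) = p * (measure Omega U)\<^sup>2"
  proof -
    have "(\<integral>z\<in>U \<times> U. Wc p (fst z) (snd z) \<partial>?M)
        = (\<Sum>k<6. \<Sum>l<6. 3 * p * pat k l * (measure Omega (V k) * measure Omega (V l)))"
      unfolding U_def
    proof (rule CL[OF _ finite_Omega _ Vdisj])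
      fix k l x y assume "k \<in> {..<6::nat}" "l \<in> {..<6::nat}" "x \<in> V k" "y \<in> V l"
      then have "x \<in> Pt k" "y \<in> Pt l" using V by auto
      then show "Wc p x y = 3 * p * pat k l" by (rule Wc_const)
    qed (use V in auto)
    also have "\<dots> = (\<Sum>k<6. \<Sum>l<6. 3 * p * pat k l * (nv c k / 40 * (nv c l / 40)))"
    proof -
      have Vm: "\<And>i. i < 6 \<Longrightarrow> measure Omega (V i) = nv c i / 40" using V by blast
      show ?thesis by (intro sum.cong refl) (simp add: Vm)
    qed
    also have "\<dots> = 3 * p * qf (\<lambda>i. nv c i / 40)" by (rule sum6)
    also have "\<dots> = p * (measure Omega U)\<^sup>2" using nv_tight[OF c] mU by simp
    finally show ?thesis .
  qed
  have cellU: "cell a \<union> cell b \<subseteq> U"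
  proof
    fix x assume x: "x \<in> cell a \<union> cell b"
    then obtain k where k: "k = a \<or> k = b" "x \<in> cell k" by blast
    have "partOf k < 6" by (simp add: partOf_def)
    moreover have "x \<in> R (partOf k)" using x k cell_Pt by (auto simp: R_def)
    ultimately show "x \<in> U" using V unfolding U_def by blast
  qed
  have UU: "cell a \<times> cell b \<subseteq> U \<times> U" using cellU by auto
  have "(\<integral>z\<in>cell a \<times> cell b. ?f z \<partial>?M) \<le> (\<integral>z\<in>U \<times> U. ?f z \<partial>?M)"
    unfolding set_lebesgue_integral_def
  proof (rule Bochner_Integration.integral_mono)
    show "integrable ?M (\<lambda>z. indicator (cell a \<times> cell b) z *\<^sub>R ?f z)"
      by (intro integrable_mult_indicator pair_measureI cell_sets fint)
    show "integrable ?M (\<lambda>z. indicator (U \<times> U) z *\<^sub>R ?f z)"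
      by (intro integrable_mult_indicator pair_measureI U fint)
    fix z assume z: "z \<in> space ?M"
    show "indicator (cell a \<times> cell b) z *\<^sub>R ?f z \<le> indicator (U \<times> U) z *\<^sub>R ?f z"
      using fbnd[OF z] UU by (auto simp: indicator_def)
  qed
  then have fUpos: "0 < (\<integral>z\<in>U \<times> U. ?f z \<partial>?M)" using cpos by simp
  have "(\<integral>z\<in>U \<times> U. (\<lambda>x y. Wc p x y - W' x y) (fst z) (snd z) \<partial>?M)
      = (\<integral>z\<in>U \<times> U. Wc p (fst z) (snd z) \<partial>?M) - (\<integral>z\<in>U \<times> U. ?f z \<partial>?M)"
  proof -
    have "set_integrable ?M (U \<times> U) (\<lambda>z. Wc p (fst z) (snd z))"
      unfolding set_integrable_def by (intro integrable_mult_indicator pair_measureI U Wint)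
    moreover have "set_integrable ?M (U \<times> U) ?f"
      unfolding set_integrable_def by (intro integrable_mult_indicator pair_measureI U fint)
    ultimately show ?thesis by (simp add: set_integral_diff)
  qed
  also have "\<dots> < p * (measure Omega U)\<^sup>2" using intW fUpos by simp
  finally have "(\<integral>z\<in>U \<times> U. (\<lambda>x y. Wc p x y - W' x y) (fst z) (snd z) \<partial>?M) < p * (measure Omega U)\<^sup>2" .
  moreover have "p * (measure Omega U)\<^sup>2 \<le> (\<integral>z\<in>U \<times> U. (\<lambda>x y. Wc p x y - W' x y) (fst z) (snd z) \<partial>?M)"
    using dense U unfolding locally_dense_def by blast
  ultimately show False by simp
qed


theorem proposition5p1:
  fixes p :: real
  assumes "0 < p" and "p < 1/3"
  shows "\<exists>W. graphon Omega W \<and> locally_dense Omega p W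
    \<and> (\<integral>z. W (fst z) (snd z) \<partial>(Omega \<Otimes>\<^sub>M Omega)) = 9 * p / 8
    \<and> (\<forall>W'. graphon Omega W' \<and> \<not> (AE z in Omega \<Otimes>\<^sub>M Omega. W' (fst z) (snd z) = 0)
           \<longrightarrow> \<not> locally_dense Omega p (\<lambda>x y. W x y - W' x y))
    \<and> \<not> locally_dense (Omega \<Otimes>\<^sub>M Omega) (p\<^sup>2) (tensor W W)
    \<and> (\<forall>l::nat. l \<ge> 5 \<longrightarrow> \<not> locally_dense Omega (p ^ l) (opow Omega W l))"
proof (intro exI[of _ "Wc p"] conjI allI impI)
  show "graphon Omega (Wc p)" using assms by (rule Wc_graphon)
  show "locally_dense Omega p (Wc p)" using assms(1) by (rule Wc_dense)
  show "(\<integral>z. Wc p (fst z) (snd z) \<partial>(Omega \<Otimes>\<^sub>M Omega)) = 9 * p / 8" by (rule Wc_density)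
  fix W' assume "graphon Omega W' \<and> \<not> (AE z in Omega \<Otimes>\<^sub>M Omega. W' (fst z) (snd z) = 0)"
  then show "\<not> locally_dense Omega p (\<lambda>x y. Wc p x y - W' x y)"
    using minimal[OF assms] by blast
next
  show "\<not> locally_dense (Omega \<Otimes>\<^sub>M Omega) (p\<^sup>2) (tensor (Wc p) (Wc p))"
    using assms(1) by (rule tensor_not_dense)
next
  fix l :: nat assume "5 \<le> l"
  then show "\<not> locally_dense Omega (p ^ l) (opow Omega (Wc p) l)"
    using assms(1) opow_not_dense by blast
qed

end
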